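(* Let $(\mathfrak{g},[\cdot,\ldots,\cdot],\varepsilon,\alpha)$ be an $n$-Hom-Lie color algebra. Then $\mathfrak{g}$ admits a product structure if and only if $\mathfrak{g}$ admits a decomposition $\mathfrak{g}=\mathfrak{g}_+\oplus\mathfrak{g}_-$ (so that $\mathfrak{g}_\gamma=(\mathfrak{g}_+\cap\mathfrak{g}_\gamma)\oplus(\mathfrak{g}_-\cap\mathfrak{g}_\gamma)$ for every $\gamma\in\Gamma$) into two nonzero $\Gamma$-graded subalgebras $\mathfrak{g}_+$ and $\mathfrak{g}_-$. Moreover, if $\mathcal{P}$ is a product structure, the eigenspaces $\mathfrak{g}_+=\{x:\mathcal{P}x=x\}$ and $\mathfrak{g}_-=\{x:\mathcal{P}x=-x\}$ give such a decomposition.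
   Context: $\mathbb{K}$ is a field of characteristic zero and $\Gamma$ an abelian group. A bicharacter is a map $\varepsilon:\Gamma\times\Gamma\to\mathbb{K}\setminus\{0\}$ with $\varepsilon(a,b)\varepsilon(b,a)=1$, $\varepsilon(a,b+c)=\varepsilon(a,b)\varepsilon(a,c)$, $\varepsilon(a+b,c)=\varepsilon(a,c)\varepsilon(b,c)$. For homogeneous $x,y$, $\varepsilon(x,y)=\varepsilon(|x|,|y|)$ and $\varepsilon(x,y_1+\dots+y_k)=\varepsilon(|x|,|y_1|+\dots+|y_k|)$ ($=1$ for an empty sum). An $n$-Hom-Lie color algebra $(\mathfrak{g},[\cdot,\ldots,\cdot],\varepsilon,\alpha)$ is a $\Gamma$-graded vector space with an $n$-linear bracket of degree zero, a bicharacter $\varepsilon$ and a degree-zero linear map $\alpha$ such that for homogeneous elements: (i) $[x_1,\ldots,x_i,x_{i+1},\ldots,x_n]=-\varepsilon(x_i,x_{i+1})[x_1,\ldots,x_{i+1},x_i,\ldots,x_n]$; (ii) $[\alpha(x_1),\ldots,\alpha(x_{n-1}),[y_1,\ldots,y_n]]=\sum_{i=1}^n\varepsilon(x_1+\dots+x_{n-1},y_1+\dots+y_{i-1})[\alpha(y_1),\ldots,\alpha(y_{i-1}),[x_1,\ldots,x_{n-1},y_i],\alpha(y_{i+1}),\ldots,\alpha(y_n)]$. A $\Gamma$-graded subalgebra is a graded subspace $\mathfrak{h}=\bigoplus_\gamma(\mathfrak{h}\cap\mathfrak{g}_\gamma)$ with $\alpha(\mathfrak{h})\subseteq\mathfrak{h}$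 and $[\mathfrak{h},\ldots,\mathfrak{h}]\subseteq\mathfrak{h}$. For a degree-zero linear $\mathcal{N}$ set $[\cdot]^0_{\mathcal{N}}=[\cdot]$ and $[x_1,\ldots,x_n]^j_{\mathcal{N}}=\sum_{i_1<\dots<i_j}[x_1,\ldots,\mathcal{N}x_{i_1},\ldots,\mathcal{N}x_{i_j},\ldots,x_n]-\mathcal{N}([x_1,\ldots,x_n]^{j-1}_{\mathcal{N}})$ for $1\le j\le n-1$ ($\mathcal{N}$ applied exactly at positions $i_1,\ldots,i_j$); $\mathcal{N}$ is a Nijenhuis operator if $\mathcal{N}\alpha=\alpha\mathcal{N}$ and $[\mathcal{N}x_1,\ldots,\mathcal{N}x_n]=\mathcal{N}([x_1,\ldots,x_n]^{n-1}_{\mathcal{N}})$. An almost product structure is a degree-zero linear map $\mathcal{P}:\mathfrak{g}\to\mathfrak{g}$ with $\mathcal{P}\neq\pm\mathrm{id}_{\mathfrak{g}}$ and $\mathcal{P}^2=\mathrm{id}_{\mathfrak{g}}$; a product structure is an almost product structure which is a Nijenhuis operator. *)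

theory Defs
  imports Complex_Main
begin

text \<open>
  Homogeneous elements are handled by quantifying over
  explicit degrees (lists of degrees ds with xs!i in Gr (ds!i)).
\<close>

definition bicharacter :: "('g::ab_group_add \<Rightarrow> 'g \<Rightarrow> 'k::field) \<Rightarrow> bool" where
  "bicharacter eps \<longleftrightarrow>
     (\<forall>a b. eps a b \<noteq> 0) \<and>
     (\<forall>a b. eps a b * eps b a = 1) \<and>
     (\<forall>a b c. eps a (b + c) = eps a b * eps a c) \<and>
     (\<forall>a b c. eps (a + b) c = eps a c * eps b c)"

definition graded_space :: "('k::field \<Rightarrow> 'v::ab_group_add \<Rightarrow> 'v) \<Rightarrow> ('g \<Rightarrow> 'v set) \<Rightarrow> bool" where
  "graded_space scale Gr \<longleftrightarrow>
     vector_space scale \<and>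
     (\<forall>\<gamma>. module.subspace scale (Gr \<gamma>)) \<and>
     (\<forall>v. \<exists>!c::'g \<Rightarrow> 'v. finite {\<gamma>. c \<gamma> \<noteq> 0} \<and> (\<forall>\<gamma>. c \<gamma> \<in> Gr \<gamma>)
                         \<and> v = sum c {\<gamma>. c \<gamma> \<noteq> 0})"

definition deg0_linear :: "('k::field \<Rightarrow> 'v::ab_group_add \<Rightarrow> 'v) \<Rightarrow> ('g \<Rightarrow> 'v set) \<Rightarrow> ('v \<Rightarrow> 'v) \<Rightarrow> bool" where
  "deg0_linear scale Gr f \<longleftrightarrow> Vector_Spaces.linear scale scale f \<and> (\<forall>\<gamma>. \<forall>x\<in>Gr \<gamma>. f x \<in> Gr \<gamma>)"

definition multilinear :: "('k::field \<Rightarrow> 'v::ab_group_add \<Rightarrow> 'v) \<Rightarrow> nat \<Rightarrow> ('v list \<Rightarrow> 'v) \<Rightarrow> bool" where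
  "multilinear scale n br \<longleftrightarrow>
     (\<forall>xs i a b. length xs = n \<longrightarrow> i < n \<longrightarrow>
         br (xs[i := a + b]) = br (xs[i := a]) + br (xs[i := b])) \<and>
     (\<forall>xs i k a. length xs = n \<longrightarrow> i < n \<longrightarrow>
         br (xs[i := scale k a]) = scale k (br (xs[i := a])))"

definition homog :: "('g \<Rightarrow> 'v set) \<Rightarrow> 'v list \<Rightarrow> 'g list \<Rightarrow> bool" where
  "homog Gr xs ds \<longleftrightarrow> length xs = length ds \<and> (\<forall>i<length xs. xs ! i \<in> Gr (ds ! i))"

definition n_hom_lie_color ::
  "('k::field_char_0 \<Rightarrow> 'v::ab_group_add \<Rightarrow> 'v) \<Rightarrow> ('g::ab_group_add \<Rightarrow> 'v set) \<Rightarrow> nat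
   \<Rightarrow> ('v list \<Rightarrow> 'v) \<Rightarrow> ('g \<Rightarrow> 'g \<Rightarrow> 'k) \<Rightarrow> ('v \<Rightarrow> 'v) \<Rightarrow> bool" where
  "n_hom_lie_color scale Gr n br eps alpha \<longleftrightarrow>
     2 \<le> n \<and>
     graded_space scale Gr \<and>
     bicharacter eps \<and>
     multilinear scale n br \<and>
     (\<forall>xs ds. length xs = n \<longrightarrow> homog Gr xs ds \<longrightarrow> br xs \<in> Gr (sum_list ds)) \<and>
     deg0_linear scale Gr alpha \<and>
     \<comment> \<open>(i) epsilon-skew-symmetry\<close>
     (\<forall>xs ds i. length xs = n \<longrightarrow> homog Gr xs ds \<longrightarrow> Suc i < n \<longrightarrow>
        br xs = - scale (eps (ds ! i) (ds ! Suc i))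
                   (br (xs[i := xs ! Suc i, Suc i := xs ! i]))) \<and>
     \<comment> \<open>(ii) epsilon-Hom-Filippov--Jacobi identity\<close>
     (\<forall>xs dx ys dy. length xs = n - 1 \<longrightarrow> length ys = n \<longrightarrow>
        homog Gr xs dx \<longrightarrow> homog Gr ys dy \<longrightarrow>
        br (map alpha xs @ [br ys]) =
          (\<Sum>i<n. scale (eps (sum_list dx) (sum_list (take i dy)))
             (br (map alpha (take i ys) @ [br (xs @ [ys ! i])] @ map alpha (drop (Suc i) ys)))))"

definition graded_subalgebra ::
  "('k::field \<Rightarrow> 'v::ab_group_add \<Rightarrow> 'v) \<Rightarrow> ('g \<Rightarrow> 'v set) \<Rightarrow> nat
   \<Rightarrow> ('v list \<Rightarrow> 'v) \<Rightarrow> ('v \<Rightarrow> 'v) \<Rightarrow> 'v set \<Rightarrow> bool" where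
  "graded_subalgebra scale Gr n br alpha H \<longleftrightarrow>
     module.subspace scale H \<and>
     H = module.span scale (\<Union>\<gamma>. H \<inter> Gr \<gamma>) \<and>
     alpha ` H \<subseteq> H \<and>
     (\<forall>xs. length xs = n \<longrightarrow> set xs \<subseteq> H \<longrightarrow> br xs \<in> H)"

definition apply_at :: "('v \<Rightarrow> 'v) \<Rightarrow> nat set \<Rightarrow> 'v list \<Rightarrow> 'v list" where
  "apply_at N S xs = map (\<lambda>i. if i \<in> S then N (xs ! i) else xs ! i) [0..<length xs]"

fun bracketN :: "('v::ab_group_add list \<Rightarrow> 'v) \<Rightarrow> ('v \<Rightarrow> 'v) \<Rightarrow> nat \<Rightarrow> 'v list \<Rightarrow> 'v" where
  "bracketN br N 0 xs = br xs"
| "bracketN br N (Suc j) xs =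
     (\<Sum>S\<in>{S. S \<subseteq> {0..<length xs} \<and> card S = Suc j}. br (apply_at N S xs))
     - N (bracketN br N j xs)"

definition nijenhuis ::
  "('k::field \<Rightarrow> 'v::ab_group_add \<Rightarrow> 'v) \<Rightarrow> ('g \<Rightarrow> 'v set) \<Rightarrow> nat
   \<Rightarrow> ('v list \<Rightarrow> 'v) \<Rightarrow> ('v \<Rightarrow> 'v) \<Rightarrow> ('v \<Rightarrow> 'v) \<Rightarrow> bool" where
  "nijenhuis scale Gr n br alpha N \<longleftrightarrow>
     deg0_linear scale Gr N \<and> N \<circ> alpha = alpha \<circ> N \<and>
     (\<forall>xs. length xs = n \<longrightarrow> br (map N xs) = N (bracketN br N (n - 1) xs))"

definition almost_product ::
  "('k::field \<Rightarrow> 'v::ab_group_add \<Rightarrow> 'v) \<Rightarrow> ('g \<Rightarrow> 'v set) \<Rightarrow> ('v \<Rightarrow> 'v) \<Rightarrow> bool" where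
  "almost_product scale Gr P \<longleftrightarrow>
     deg0_linear scale Gr P \<and> P \<noteq> id \<and> P \<noteq> (\<lambda>x. - x) \<and> P \<circ> P = id"

definition product_structure ::
  "('k::field \<Rightarrow> 'v::ab_group_add \<Rightarrow> 'v) \<Rightarrow> ('g \<Rightarrow> 'v set) \<Rightarrow> nat
   \<Rightarrow> ('v list \<Rightarrow> 'v) \<Rightarrow> ('v \<Rightarrow> 'v) \<Rightarrow> ('v \<Rightarrow> 'v) \<Rightarrow> bool" where
  "product_structure scale Gr n br alpha P \<longleftrightarrow>
     almost_product scale Gr P \<and> nijenhuis scale Gr n br alpha P"

definition subalgebra_decomposition ::
  "('k::field \<Rightarrow> 'v::ab_group_add \<Rightarrow> 'v) \<Rightarrow> ('g \<Rightarrow> 'v set) \<Rightarrow> nat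
   \<Rightarrow> ('v list \<Rightarrow> 'v) \<Rightarrow> ('v \<Rightarrow> 'v) \<Rightarrow> 'v set \<Rightarrow> 'v set \<Rightarrow> bool" where
  "subalgebra_decomposition scale Gr n br alpha Hp Hm \<longleftrightarrow>
     graded_subalgebra scale Gr n br alpha Hp \<and> graded_subalgebra scale Gr n br alpha Hm \<and>
     Hp \<noteq> {0} \<and> Hm \<noteq> {0} \<and>
     (\<forall>v. \<exists>!p. fst p \<in> Hp \<and> snd p \<in> Hm \<and> v = fst p + snd p)"

end

theory Submission
  imports Defs
begin


lemma apply_at_length[simp]: "length (apply_at N S xs) = length xs"
  by (simp add: apply_at_def)

lemma apply_at_nth[simp]: "i < length xs \<Longrightarrow> apply_at N S xs ! i = (if i \<in> S then N (xs ! i) else xs ! i)"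
  by (simp add: apply_at_def)

lemma apply_at_update:
  "m < length xs \<Longrightarrow> apply_at N S (xs[m := c]) = (apply_at N S xs)[m := (if m \<in> S then N c else c)]"
  by (rule nth_equalityI) (auto simp: nth_list_update)

lemma apply_at_insert:
  assumes "t < length xs" "t \<notin> T"
  shows "apply_at N (insert t T) xs = (apply_at N T xs)[t := N (apply_at N T xs ! t)]"
  using assms by (intro nth_equalityI) (auto simp: nth_list_update)

definition madd :: "nat \<Rightarrow> ('v::ab_group_add list \<Rightarrow> 'v) \<Rightarrow> bool" where
  "madd n br \<longleftrightarrow> (\<forall>xs i a b. length xs = n \<longrightarrow> i < n \<longrightarrow>
         br (xs[i := a + b]) = br (xs[i := a]) + br (xs[i := b]))"

lemma multilinear_madd: "multilinear scale n br \<Longrightarrow> madd n br"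
  unfolding multilinear_def madd_def by blast

lemma br_zero:
  assumes "madd n br" "length ys = n" "t < n"
  shows "br (ys[t := 0]) = 0"
proof -
  have "br (ys[t := 0 + 0]) = br (ys[t := 0]) + br (ys[t := 0])"
    using assms unfolding madd_def by blast
  then show ?thesis by simp
qed

lemma br_neg:
  assumes "madd n br" "length ys = n" "t < n"
  shows "br (ys[t := - (ys ! t)]) = - br ys"
proof -
  have "br (ys[t := ys ! t + - (ys ! t)]) = br (ys[t := ys ! t]) + br (ys[t := - (ys ! t)])"
    using assms unfolding madd_def by blast
  then have "0 = br ys + br (ys[t := - (ys ! t)])"
    using br_zero[OF assms] by simp
  then show ?thesis by (simp add: eq_neg_iff_add_eq_0 add.commute)
qed

lemma br_apply_neg:
  assumes "madd n br" "length xs = n" "T \<subseteq> {0..<n}"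
  shows "br (apply_at uminus T xs) = (if even (card T) then br xs else - br xs)"
proof -
  have "finite T" using assms(3) finite_subset by blast
  then show ?thesis using assms(3)
  proof (induction T rule: finite_induct)
    case empty
    have "apply_at uminus {} xs = xs" by (rule nth_equalityI) auto
    then show ?case by simp
  next
    case (insert t T)
    have t: "t < n" using insert by auto
    have "br (apply_at uminus (insert t T) xs) = - br (apply_at uminus T xs)"
      using apply_at_insert[of t xs T uminus] t assms insert br_neg[OF assms(1), of "apply_at uminus T xs" t]
      by simp
    then show ?case using insert by simp
  qed
qed

lemma bracketN_add:
  assumes "madd n br" "length xs = n" "m < n" "\<And>x y. P (x + y) = P x + P y"
  shows "bracketN br P j (xs[m := a + b]) = bracketN br P j (xs[m := a]) + bracketN br P j (xs[m := b])"
proof (induction j)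
  case 0
  then show ?case using assms unfolding madd_def by simp
next
  case (Suc j)
  have br: "br (apply_at P S (xs[m := a + b])) = br (apply_at P S (xs[m := a])) + br (apply_at P S (xs[m := b]))" for S
    using assms apply_at_update[of m xs P S] unfolding madd_def by auto
  show ?case using Suc assms(4) by (simp add: br sum.distrib algebra_simps)
qed

lemma pow_insert_sum_zero:
  fixes f :: "nat set \<Rightarrow> 'k::comm_ring_1"
  assumes "finite X" "r \<in> X" "\<And>S. S \<subseteq> X - {r} \<Longrightarrow> f (insert r S) = - f S"
  shows "(\<Sum>S\<in>Pow X. f S) = 0"
proof -
  define A where "A = X - {r}"
  have X: "X = insert r A" "r \<notin> A" "finite A" using assms A_def by auto
  have "Pow X = Pow A \<union> insert r ` Pow A" using X Pow_insert by metis
  moreover have "Pow A \<inter> insert r ` Pow A = {}" using X by auto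
  moreover have "inj_on (insert r) (Pow A)" using X by (intro inj_onI) (metis PowD Diff_insert_absorb subsetD)
  ultimately have "(\<Sum>S\<in>Pow X. f S) = (\<Sum>S\<in>Pow A. f S) + (\<Sum>S\<in>Pow A. f (insert r S))"
    using X by (simp add: sum.union_disjoint sum.reindex)
  also have "(\<Sum>S\<in>Pow A. f (insert r S)) = (\<Sum>S\<in>Pow A. - f S)"
    using assms(3) A_def by (intro sum.cong) auto
  finally show ?thesis by (simp add: sum_negf)
qed

definition psi :: "nat set \<Rightarrow> nat set \<Rightarrow> 'k::field" where
  "psi R S = (-1) ^ card (S \<inter> R)"

definition alphaf :: "nat \<Rightarrow> nat set \<Rightarrow> nat \<Rightarrow> 'k::field" where
  "alphaf n R j = (\<Sum>S\<in>{S. S \<subseteq> {0..<n} \<and> card S \<le> j}. (-1) ^ (j - card S) * psi R S)"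

definition betaf :: "nat \<Rightarrow> nat set \<Rightarrow> nat \<Rightarrow> 'k::field" where
  "betaf n R j = (\<Sum>S\<in>{S. S \<subseteq> {0..<n} \<and> card S \<le> j}. psi R S)"

definition Kf :: "nat \<Rightarrow> nat set \<Rightarrow> nat \<Rightarrow> 'k::field" where
  "Kf n R j = (\<Sum>S\<in>{S. S \<subseteq> {0..<n} \<and> card S = j}. psi R S)"

lemma split_le_Suc:
  "{S. S \<subseteq> {0..<n} \<and> card S \<le> Suc j} = {S. S \<subseteq> {0..<n} \<and> card S = Suc j} \<union> {S. S \<subseteq> {0..<n} \<and> card S \<le> j}"
  by auto

lemma fin_subs: "finite {S. S \<subseteq> {0..<(n::nat)} \<and> P S}"
  by (rule finite_subset[of _ "Pow {0..<n}"]) auto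

lemma betaf_Suc: "betaf n R (Suc j) = Kf n R (Suc j) + betaf n R j"
  unfolding betaf_def Kf_def split_le_Suc
  by (subst sum.union_disjoint) (auto simp: fin_subs)

lemma alphaf_Suc: "alphaf n R (Suc j) = Kf n R (Suc j) - alphaf n R j"
proof -
  have "alphaf n R (Suc j) = (\<Sum>S\<in>{S. S \<subseteq> {0..<n} \<and> card S = Suc j}. (-1) ^ (Suc j - card S) * psi R S)
     + (\<Sum>S\<in>{S. S \<subseteq> {0..<n} \<and> card S \<le> j}. (-1) ^ (Suc j - card S) * psi R S)"
    unfolding alphaf_def split_le_Suc
    by (subst sum.union_disjoint) (auto simp: fin_subs)
  also have "(\<Sum>S\<in>{S. S \<subseteq> {0..<n} \<and> card S = Suc j}. (-1) ^ (Suc j - card S) * psi R S) = Kf n R (Suc j)"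
    unfolding Kf_def by (intro sum.cong) auto
  also have "(\<Sum>S\<in>{S. S \<subseteq> {0..<n} \<and> card S \<le> j}. (-1) ^ (Suc j - card S) * psi R S)
     = (\<Sum>S\<in>{S. S \<subseteq> {0..<n} \<and> card S \<le> j}. - ((-1) ^ (j - card S) * psi R S))"
    by (intro sum.cong) (auto simp: Suc_diff_le)
  finally show ?thesis unfolding alphaf_def by (simp add: sum_negf)
qed

lemma alphaf_0: "alphaf n R 0 = 1" and betaf_0: "betaf n R 0 = 1"
proof -
  have e: "{S. S \<subseteq> {0..<n} \<and> card S \<le> 0} = {{}}"
    by (auto dest: finite_subset[OF _ finite_atLeastLessThan])
  show "alphaf n R 0 = 1" "betaf n R 0 = 1" unfolding alphaf_def betaf_def e by (simp_all add: psi_def)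
qed

lemma Kf_n: "Kf n R n = psi R {0..<n}"
proof -
  have "{S. S \<subseteq> {0..<n} \<and> card S = n} = {{0..<n}}"
    using card_subset_eq[of "{0..<n}"] by auto
  then show ?thesis unfolding Kf_def by simp
qed

lemma Pow_le_n: "{S. S \<subseteq> {0..<n} \<and> card S \<le> n} = Pow {0..<n}"
  using card_mono[of "{0..<n}"] by auto

lemma betaf_zero:
  assumes "r \<in> R" "r < n"
  shows "betaf n R n = 0"
  unfolding betaf_def Pow_le_n
proof (rule pow_insert_sum_zero)
  fix S assume S: "S \<subseteq> {0..<n} - {r}"
  then have "finite S" "r \<notin> S" by (auto dest: finite_subset)
  then have "insert r S \<inter> R = insert r (S \<inter> R)" "finite (S \<inter> R)" "r \<notin> S \<inter> R" using assms by auto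
  then show "psi R (insert r S) = - psi R S" unfolding psi_def by simp
qed (use assms in auto)

lemma alphaf_zero:
  assumes "q \<notin> R" "q < n"
  shows "alphaf n R n = 0"
  unfolding alphaf_def Pow_le_n
proof (rule pow_insert_sum_zero)
  fix S assume S: "S \<subseteq> {0..<n} - {q}"
  then have fs: "finite S" "q \<notin> S" by (auto dest: finite_subset)
  then have "insert q S \<inter> R = S \<inter> R" using assms by auto
  moreover have "card S < n"
  proof -
    have "card S \<le> card ({0..<n} - {q})" using S by (intro card_mono) auto
    then show ?thesis using assms by simp
  qed
  ultimately show "(-1) ^ (n - card (insert q S)) * psi R (insert q S) = - ((-1) ^ (n - card S) * psi R S)"
    using fs unfolding psi_def by (simp add: Suc_diff_Suc[symmetric])
qed (use assms in auto)

lemma betaf_empty: "betaf n {} n = (of_nat (2 ^ n) :: 'k::field)"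
  unfolding betaf_def Pow_le_n psi_def by (simp add: card_Pow)

lemma alphaf_full: "alphaf n {0..<n} n = (-1) ^ n * (of_nat (2 ^ n) :: 'k::field)"
proof -
  have "alphaf n {0..<n} n = (\<Sum>S\<in>Pow {0..<n}. ((-1) ^ n :: 'k))"
    unfolding alphaf_def Pow_le_n psi_def
  proof (intro sum.cong refl)
    fix S assume "S \<in> Pow {0..<n}"
    then have "S \<inter> {0..<n} = S" "card S \<le> n" using card_mono[of "{0..<n}" S] by auto
    then show "(-1) ^ (n - card S) * (-1) ^ card (S \<inter> {0..<n}) = ((-1) ^ n :: 'k)"
      by (simp add: power_add[symmetric])
  qed
  then show ?thesis by (simp add: card_Pow)
qed



lemma P0_lemma:
  assumes Padd: "\<And>x y. P (x + y) = P x + P y"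
  shows "P (0::'v::ab_group_add) = (0::'w::ab_group_add)"
proof -
  have "P 0 = P 0 + P (0::'v)" using Padd[of 0 0] by simp
  then show ?thesis by simp
qed

lemma Pneg_lemma:
  assumes Padd: "\<And>x y. P (x + y) = P x + P y"
  shows "P (- (x::'v::ab_group_add)) = - (P x :: 'w::ab_group_add)"
proof -
  have "P x + P (- x) = 0" using Padd[of x "- x"] P0_lemma[OF Padd] by simp
  then show ?thesis by (simp add: eq_neg_iff_add_eq_0 add.commute)
qed

lemma eig_sep:
  fixes scale :: "'k::field_char_0 \<Rightarrow> 'v::ab_group_add \<Rightarrow> 'v" and P :: "'v \<Rightarrow> 'v" and X Y :: 'v
  assumes vs: "vector_space scale" and Padd: "\<And>x y. P (x + y) = P x + P y"
    and XY: "X + Y = 0" and PX: "P X = X" and PY: "P Y = - Y"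
  shows "X = 0 \<and> Y = 0"
proof -
  interpret vector_space scale by fact
  have "P (X + Y) = X - Y" using Padd[of X Y] PX PY by simp
  then have "X - Y = 0" using XY P0_lemma[OF Padd] by simp
  then have "X = Y" by simp
  then have "X + X = 0" using XY by simp
  then have "scale (1 + 1) X = 0" by (simp only: scale_left_distrib scale_one)
  then have "scale 2 X = 0" by simp
  then have "X = 0" by simp
  then show ?thesis using XY by simp
qed
lemma psi_scale:
  fixes scale :: "'k::field_char_0 \<Rightarrow> 'v::ab_group_add \<Rightarrow> 'v"
  assumes vs: "vector_space scale"
  shows "(if even (card (S \<inter> R)) then b else - b) = scale (psi R S) b"
proof -
  interpret vector_space scale by fact
  show ?thesis unfolding psi_def by (simp add: minus_one_power_iff)
qed

lemma br_apply_P: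
  fixes scale :: "'k::field_char_0 \<Rightarrow> 'v::ab_group_add \<Rightarrow> 'v"
  assumes vs: "vector_space scale" and ma: "madd n br" and len: "length xs = n"
    and R: "R \<subseteq> {0..<n}"
    and hx: "\<And>k. k < n \<Longrightarrow> P (xs ! k) = (if k \<in> R then - (xs ! k) else xs ! k)"
    and S: "S \<subseteq> {0..<n}"
  shows "br (apply_at P S xs) = scale (psi R S) (br xs)"
proof -
  have "apply_at P S xs = apply_at uminus (S \<inter> R) xs"
    using len hx by (intro nth_equalityI) auto
  then have "br (apply_at P S xs) = (if even (card (S \<inter> R)) then br xs else - br xs)"
    using br_apply_neg[OF ma len, of "S \<inter> R"] S by (simp add: le_infI1)
  then show ?thesis using psi_scale[OF vs] by simp
qed

lemma core:
  fixes scale :: "'k::field_char_0 \<Rightarrow> 'v::ab_group_add \<Rightarrow> 'v"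
  assumes vs: "vector_space scale" and ma: "madd n br" and len: "length xs = n"
    and R: "R \<subseteq> {0..<n}"
    and hx: "\<And>k. k < n \<Longrightarrow> P (xs ! k) = (if k \<in> R then - (xs ! k) else xs ! k)"
    and Padd: "\<And>x y. P (x + y) = P x + P y" and Psc: "\<And>c x. P (scale c x) = scale c (P x)"
    and b: "br xs = u + w" and Pu: "P u = u" and Pw: "P w = - w"
  shows "bracketN br P j xs = scale (alphaf n R j) u + scale (betaf n R j) w"
proof (induction j)
  interpret vector_space scale by fact
  case 0
  then show ?case using b by (simp add: alphaf_0 betaf_0)
next
  interpret vector_space scale by fact
  case (Suc j)
  have Pneg: "P (- x) = - P x" for x using Pneg_lemma[OF Padd] .
  have "(\<Sum>S\<in>{S. S \<subseteq> {0..<length xs} \<and> card S = Suc j}. br (apply_at P S xs))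
      = (\<Sum>S\<in>{S. S \<subseteq> {0..<n} \<and> card S = Suc j}. scale (psi R S) (br xs))"
    using br_apply_P[OF vs ma len R hx] len by (intro sum.cong) auto
  also have "\<dots> = scale (Kf n R (Suc j)) (br xs)"
    unfolding Kf_def by (simp add: scale_sum_left)
  finally have s: "(\<Sum>S\<in>{S. S \<subseteq> {0..<length xs} \<and> card S = Suc j}. br (apply_at P S xs))
      = scale (Kf n R (Suc j)) u + scale (Kf n R (Suc j)) w" using b by (simp add: scale_right_distrib)
  have p: "P (bracketN br P j xs) = scale (alphaf n R j) u - scale (betaf n R j) w"
    using Suc Padd Psc Pu Pw Pneg by simp
  show ?case unfolding bracketN.simps s p alphaf_Suc betaf_Suc
    by (simp add: algebra_simps)
qed

lemma final:
  fixes scale :: "'k::field_char_0 \<Rightarrow> 'v::ab_group_add \<Rightarrow> 'v"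
  assumes vs: "vector_space scale" and ma: "madd n br" and len: "length xs = n" and n: "1 \<le> n"
    and R: "R \<subseteq> {0..<n}"
    and hx: "\<And>k. k < n \<Longrightarrow> P (xs ! k) = (if k \<in> R then - (xs ! k) else xs ! k)"
    and Padd: "\<And>x y. P (x + y) = P x + P y" and Psc: "\<And>c x. P (scale c x) = scale c (P x)"
    and b: "br xs = u + w" and Pu: "P u = u" and Pw: "P w = - w"
  shows "br (map P xs) = P (bracketN br P (n - 1) xs)
     \<longleftrightarrow> scale (alphaf n R n) u = 0 \<and> scale (betaf n R n) w = 0"
proof -
  interpret vector_space scale by fact
  have Pneg: "P (- x) = - P x" for x using Pneg_lemma[OF Padd] .
  have "map P xs = apply_at P {0..<n} xs" using len by (intro nth_equalityI) auto
  then have L: "br (map P xs) = scale (Kf n R n) u + scale (Kf n R n) w"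
    using br_apply_P[OF vs ma len R hx, of "{0..<n}"] b by (simp add: Kf_n scale_right_distrib)
  have Rr: "P (bracketN br P (n - 1) xs) = scale (alphaf n R (n-1)) u - scale (betaf n R (n-1)) w"
    using core[OF vs ma len R hx Padd Psc b Pu Pw, of "n - 1"] Padd Psc Pu Pw Pneg by simp
  have nn: "n = Suc (n - 1)" using n by simp
  have A: "alphaf n R n = Kf n R n - alphaf n R (n-1)" using alphaf_Suc[of n R "n - 1"] by (simp only: nn[symmetric])
  have B: "betaf n R n = Kf n R n + betaf n R (n-1)" using betaf_Suc[of n R "n - 1"] by (simp only: nn[symmetric])
  have "br (map P xs) = P (bracketN br P (n - 1) xs) \<longleftrightarrow>
      scale (alphaf n R n) u + scale (betaf n R n) w = 0"
  proof -
    have "(scale (Kf n R n) u + scale (Kf n R n) w) - (scale (alphaf n R (n-1)) u - scale (betaf n R (n-1)) w)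
       = scale (Kf n R n - alphaf n R (n-1)) u + scale (Kf n R n + betaf n R (n-1)) w"
      by (simp add: algebra_simps)
    then show ?thesis unfolding L Rr A B by (metis eq_iff_diff_eq_0)
  qed
  also have "\<dots> \<longleftrightarrow> scale (alphaf n R n) u = 0 \<and> scale (betaf n R n) w = 0"
  proof
    assume h: "scale (alphaf n R n) u + scale (betaf n R n) w = 0"
    have Pa: "P (scale (alphaf n R n) u) = scale (alphaf n R n) u" using Psc Pu by simp
    have Pb: "P (scale (betaf n R n) w) = - scale (betaf n R n) w" using Psc Pw by simp
    show "scale (alphaf n R n) u = 0 \<and> scale (betaf n R n) w = 0"
      by (rule eig_sep[OF vs Padd h Pa Pb])
  qed auto
  finally show ?thesis .
qed



definition cf :: "('g \<Rightarrow> 'v::ab_group_add set) \<Rightarrow> 'v \<Rightarrow> 'g \<Rightarrow> 'v" where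
  "cf Gr v = (THE c. finite {\<gamma>. c \<gamma> \<noteq> 0} \<and> (\<forall>\<gamma>. c \<gamma> \<in> Gr \<gamma>) \<and> v = sum c {\<gamma>. c \<gamma> \<noteq> 0})"

lemma cf_props:
  assumes "graded_space scale Gr"
  shows "finite {\<gamma>. cf Gr v \<gamma> \<noteq> 0} \<and> (\<forall>\<gamma>. cf Gr v \<gamma> \<in> Gr \<gamma>) \<and> v = sum (cf Gr v) {\<gamma>. cf Gr v \<gamma> \<noteq> 0}"
proof -
  have "\<exists>!c. finite {\<gamma>. c \<gamma> \<noteq> 0} \<and> (\<forall>\<gamma>. c \<gamma> \<in> Gr \<gamma>) \<and> v = sum c {\<gamma>. c \<gamma> \<noteq> 0}"
    using assms unfolding graded_space_def by blast
  then show ?thesis unfolding cf_def by (rule theI')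
qed

lemma cf_unique:
  assumes gs: "graded_space scale Gr" and T: "finite T" and d: "\<And>\<gamma>. d \<gamma> \<in> Gr \<gamma>"
    and z: "\<And>\<gamma>. \<gamma> \<notin> T \<Longrightarrow> d \<gamma> = 0" and v: "v = sum d T"
  shows "cf Gr v = d"
proof -
  have ex: "\<exists>!c. finite {\<gamma>. c \<gamma> \<noteq> 0} \<and> (\<forall>\<gamma>. c \<gamma> \<in> Gr \<gamma>) \<and> v = sum c {\<gamma>. c \<gamma> \<noteq> 0}"
    using gs unfolding graded_space_def by blast
  have sub: "{\<gamma>. d \<gamma> \<noteq> 0} \<subseteq> T" using z by blast
  then have fin: "finite {\<gamma>. d \<gamma> \<noteq> 0}" using T finite_subset by blast
  have "sum d T = sum d {\<gamma>. d \<gamma> \<noteq> 0}"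
    using T sub by (intro sum.mono_neutral_right) auto
  then have "finite {\<gamma>. d \<gamma> \<noteq> 0} \<and> (\<forall>\<gamma>. d \<gamma> \<in> Gr \<gamma>) \<and> v = sum d {\<gamma>. d \<gamma> \<noteq> 0}"
    using fin d v by auto
  then show ?thesis unfolding cf_def by (rule the1_equality[OF ex])
qed

lemma cf_sum_T:
  assumes gs: "graded_space scale Gr" and T: "finite T" "{\<gamma>. cf Gr v \<gamma> \<noteq> 0} \<subseteq> T"
  shows "v = sum (cf Gr v) T"
proof -
  have "sum (cf Gr v) T = sum (cf Gr v) {\<gamma>. cf Gr v \<gamma> \<noteq> 0}"
    using T by (intro sum.mono_neutral_right) auto
  then show ?thesis using cf_props[OF gs, of v] by simp
qed

lemma gs_vs: "graded_space scale Gr \<Longrightarrow> vector_space scale"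
  unfolding graded_space_def by blast

lemma gs_sub: "graded_space scale Gr \<Longrightarrow> module.subspace scale (Gr \<gamma>)"
  unfolding graded_space_def by blast

lemma cf_zero:
  assumes gs: "graded_space scale Gr"
  shows "cf Gr 0 = (\<lambda>_. 0)"
proof -
  interpret vector_space scale using gs_vs[OF gs] .
  show ?thesis by (rule cf_unique[OF gs, of "{}"]) (auto intro: subspace_0[OF gs_sub[OF gs]])
qed

lemma cf_single:
  assumes gs: "graded_space scale Gr" and x: "x \<in> Gr \<gamma>"
  shows "cf Gr x = (\<lambda>\<delta>. if \<delta> = \<gamma> then x else 0)"
proof -
  interpret vector_space scale using gs_vs[OF gs] .
  show ?thesis by (rule cf_unique[OF gs, of "{\<gamma>}"]) (auto intro: subspace_0[OF gs_sub[OF gs]] x)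
qed

lemma cf_add:
  assumes gs: "graded_space scale Gr"
  shows "cf Gr (x + y) = (\<lambda>\<delta>. cf Gr x \<delta> + cf Gr y \<delta>)"
proof -
  interpret vector_space scale using gs_vs[OF gs] .
  define T where "T = {\<gamma>. cf Gr x \<gamma> \<noteq> 0} \<union> {\<gamma>. cf Gr y \<gamma> \<noteq> 0}"
  have T: "finite T" using cf_props[OF gs, of x] cf_props[OF gs, of y] T_def by auto
  have x: "x = sum (cf Gr x) T" by (rule cf_sum_T[OF gs T]) (auto simp: T_def)
  have y: "y = sum (cf Gr y) T" by (rule cf_sum_T[OF gs T]) (auto simp: T_def)
  show ?thesis
  proof (rule cf_unique[OF gs T])
    fix \<gamma> show "cf Gr x \<gamma> + cf Gr y \<gamma> \<in> Gr \<gamma>"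
      using cf_props[OF gs, of x] cf_props[OF gs, of y] subspace_add[OF gs_sub[OF gs]] by blast
  next
    fix \<gamma> assume "\<gamma> \<notin> T" then show "cf Gr x \<gamma> + cf Gr y \<gamma> = 0" by (auto simp: T_def)
  next
    show "x + y = (\<Sum>\<delta>\<in>T. cf Gr x \<delta> + cf Gr y \<delta>)" using x y by (simp add: sum.distrib)
  qed
qed

lemma cf_scale:
  assumes gs: "graded_space scale Gr"
  shows "cf Gr (scale k x) = (\<lambda>\<delta>. scale k (cf Gr x \<delta>))"
proof -
  interpret vector_space scale using gs_vs[OF gs] .
  define T where "T = {\<gamma>. cf Gr x \<gamma> \<noteq> 0}"
  have T: "finite T" using cf_props[OF gs, of x] T_def by auto
  have x: "x = sum (cf Gr x) T" by (rule cf_sum_T[OF gs T]) (auto simp: T_def)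
  show ?thesis
  proof (rule cf_unique[OF gs T])
    fix \<gamma> show "scale k (cf Gr x \<gamma>) \<in> Gr \<gamma>"
      using cf_props[OF gs, of x] subspace_scale[OF gs_sub[OF gs]] by blast
  next
    fix \<gamma> assume "\<gamma> \<notin> T" then show "scale k (cf Gr x \<gamma>) = 0" by (auto simp: T_def)
  next
    have "scale k x = scale k (sum (cf Gr x) T)" using x by (rule arg_cong)
    also have "\<dots> = (\<Sum>\<delta>\<in>T. scale k (cf Gr x \<delta>))" by (rule scale_sum_right)
    finally show "scale k x = (\<Sum>\<delta>\<in>T. scale k (cf Gr x \<delta>))" .
  qed
qed

lemma ker_graded:
  assumes gs: "graded_space scale Gr"
    and Ladd: "\<And>x y. L (x + y) = L x + L y"
    and Lgr: "\<And>\<gamma> x. x \<in> Gr \<gamma> \<Longrightarrow> L x \<in> Gr \<gamma>"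
    and Lx: "L x = 0"
  shows "x \<in> module.span scale (\<Union>\<gamma>. {y. L y = 0} \<inter> Gr \<gamma>)"
proof -
  interpret vector_space scale using gs_vs[OF gs] .
  interpret additive L by unfold_locales (rule Ladd)
  define T where "T = {\<gamma>. cf Gr x \<gamma> \<noteq> 0}"
  have T: "finite T" using cf_props[OF gs, of x] T_def by auto
  have x: "x = sum (cf Gr x) T" by (rule cf_sum_T[OF gs T]) (auto simp: T_def)
  have "cf Gr (L x) = (\<lambda>\<gamma>. L (cf Gr x \<gamma>))"
  proof (rule cf_unique[OF gs T])
    fix \<gamma> show "L (cf Gr x \<gamma>) \<in> Gr \<gamma>" using cf_props[OF gs, of x] Lgr by blast
  next
    fix \<gamma> assume "\<gamma> \<notin> T" then show "L (cf Gr x \<gamma>) = 0" by (auto simp: T_def zero)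
  next
    show "L x = (\<Sum>\<gamma>\<in>T. L (cf Gr x \<gamma>))" using x sum by metis
  qed
  then have "\<And>\<gamma>. L (cf Gr x \<gamma>) = 0" using Lx cf_zero[OF gs] by metis
  then have "\<And>\<gamma>. cf Gr x \<gamma> \<in> (\<Union>\<gamma>. {y. L y = 0} \<inter> Gr \<gamma>)" using cf_props[OF gs, of x] by blast
  then have "sum (cf Gr x) T \<in> span (\<Union>\<gamma>. {y. L y = 0} \<inter> Gr \<gamma>)"
    by (intro span_sum span_base)
  then show ?thesis using x by simp
qed



lemma half_split:
  fixes scale :: "'k::field_char_0 \<Rightarrow> 'v::ab_group_add \<Rightarrow> 'v"
  assumes vs: "vector_space scale"
  shows "b = scale (1/2) (b + Pb) + scale (1/2) (b - Pb)"
proof -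
  interpret vector_space scale by fact
  have "scale (1/2) (b + Pb) + scale (1/2) (b - Pb) = scale (1/2) b + scale (1/2) b"
    by (simp add: algebra_simps)
  also have "\<dots> = scale (1/2 + 1/2) b" by (simp only: scale_left_distrib)
  finally show ?thesis by simp
qed

lemma dir1:
  fixes scale :: "'k::field_char_0 \<Rightarrow> 'v::ab_group_add \<Rightarrow> 'v" and Gr :: "'g::ab_group_add \<Rightarrow> 'v set"
  assumes H: "n_hom_lie_color scale Gr n br eps alpha" and PS: "product_structure scale Gr n br alpha P"
  shows "subalgebra_decomposition scale Gr n br alpha {x. P x = x} {x. P x = - x}"
proof -
  have n2: "2 \<le> n" and gs: "graded_space scale Gr" and ml: "multilinear scale n br"
    and al: "deg0_linear scale Gr alpha"
    using H unfolding n_hom_lie_color_def by auto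
  have vs: "vector_space scale" using gs_vs[OF gs] .
  interpret vector_space scale by fact
  have ma: "madd n br" using multilinear_madd[OF ml] .
  have Pd: "deg0_linear scale Gr P" and Pid: "P \<noteq> id" and Pm: "P \<noteq> (\<lambda>x. - x)" and PP0: "P \<circ> P = id"
    and comm: "P \<circ> alpha = alpha \<circ> P"
    and nij: "\<And>xs. length xs = n \<Longrightarrow> br (map P xs) = P (bracketN br P (n - 1) xs)"
    using PS unfolding product_structure_def almost_product_def nijenhuis_def by auto
  have Padd: "\<And>x y. P (x + y) = P x + P y" and Psc: "\<And>c x. P (scale c x) = scale c (P x)"
    using Pd unfolding deg0_linear_def Vector_Spaces.linear_iff by auto
  have Pgr: "\<And>\<gamma> x. x \<in> Gr \<gamma> \<Longrightarrow> P x \<in> Gr \<gamma>" using Pd unfolding deg0_linear_def by auto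
  have aadd: "\<And>x y. alpha (x + y) = alpha x + alpha y"
    using al unfolding deg0_linear_def Vector_Spaces.linear_iff by auto
  have PP: "\<And>x. P (P x) = x" using PP0 by (metis comp_apply id_apply)
  have Pa: "\<And>x. P (alpha x) = alpha (P x)" using comm by (metis comp_apply)
  have Pneg: "\<And>x. P (- x) = - P x" using Pneg_lemma[OF Padd] .
  have Pdiff: "P (x - y) = P x - P y" for x y using Padd[of x "- y"] Pneg[of y] by simp
  have aneg: "\<And>x. alpha (- x) = - alpha x" using Pneg_lemma[OF aadd] .
  define u where "u b = scale (1/2) (b + P b)" for b
  define w where "w b = scale (1/2) (b - P b)" for b
  have uw: "\<And>b. b = u b + w b" unfolding u_def w_def by (rule half_split[OF vs])
  have Pu: "P (u b) = u b" for b unfolding u_def using Psc[of "1/2" "b + P b"] Padd[of b "P b"] PP[of b] by (simp add: add.commute)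
  have Pw: "P (w b) = - w b" for b unfolding w_def using Psc[of "1/2" "b - P b"] Pdiff[of b "P b"] PP[of b] by (simp flip: scale_minus_right)
  have Lp: "\<And>\<gamma> x. x \<in> Gr \<gamma> \<Longrightarrow> P x - x \<in> Gr \<gamma>"
    using Pgr subspace_diff[OF gs_sub[OF gs]] by blast
  have Lm: "\<And>\<gamma> x. x \<in> Gr \<gamma> \<Longrightarrow> P x + x \<in> Gr \<gamma>"
    using Pgr subspace_add[OF gs_sub[OF gs]] by blast
  have Lpa: "P (x + y) - (x + y) = (P x - x) + (P y - y)" for x y using Padd[of x y] by (simp add: algebra_simps)
  have Lma: "P (x + y) + (x + y) = (P x + x) + (P y + y)" for x y using Padd[of x y] by (simp add: algebra_simps)
  have Ep: "{x. P x = x} = {x. P x - x = 0}" by auto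
  have Em: "{x. P x = - x} = {x. P x + x = 0}" by (auto simp: eq_neg_iff_add_eq_0)
  have subp: "subspace {x. P x = x}"
    by (rule subspaceI) (auto simp: Padd Psc Pneg_lemma P0_lemma[OF Padd])
  have subm: "subspace {x. P x = - x}"
    by (rule subspaceI) (auto simp: Padd Psc P0_lemma[OF Padd])
  have spp: "{x. P x = x} = span (\<Union>\<gamma>. {x. P x = x} \<inter> Gr \<gamma>)"
  proof
    show "{x. P x = x} \<subseteq> span (\<Union>\<gamma>. {x. P x = x} \<inter> Gr \<gamma>)"
      using ker_graded[OF gs Lpa Lp] unfolding Ep by blast
    show "span (\<Union>\<gamma>. {x. P x = x} \<inter> Gr \<gamma>) \<subseteq> {x. P x = x}"
      by (rule span_minimal[OF _ subp]) blast
  qed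
  have spm: "{x. P x = - x} = span (\<Union>\<gamma>. {x. P x = - x} \<inter> Gr \<gamma>)"
  proof
    show "{x. P x = - x} \<subseteq> span (\<Union>\<gamma>. {x. P x = - x} \<inter> Gr \<gamma>)"
      using ker_graded[OF gs Lma Lm] unfolding Em by blast
    show "span (\<Union>\<gamma>. {x. P x = - x} \<inter> Gr \<gamma>) \<subseteq> {x. P x = - x}"
      by (rule span_minimal[OF _ subm]) blast
  qed
  have n1: "1 \<le> n" using n2 by simp
  have nz: "(of_nat (2 ^ n) :: 'k) \<noteq> 0" by simp
  have brp: "P (br xs) = br xs" if len: "length xs = n" and xs: "set xs \<subseteq> {x. P x = x}" for xs
  proof -
    have hx: "\<And>k. k < n \<Longrightarrow> P (xs ! k) = (if k \<in> {} then - (xs ! k) else xs ! k)"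
      using xs len nth_mem by fastforce
    have "scale (betaf n {} n) (w (br xs)) = 0"
      using final[OF vs ma len n1 _ hx Padd Psc uw Pu Pw] nij[OF len] by simp
    then have "w (br xs) = 0" using nz by (simp add: betaf_empty)
    then show ?thesis using uw[of "br xs"] Pu[of "br xs"] by simp
  qed
  have brm: "P (br xs) = - br xs" if len: "length xs = n" and xs: "set xs \<subseteq> {x. P x = - x}" for xs
  proof -
    have hx: "\<And>k. k < n \<Longrightarrow> P (xs ! k) = (if k \<in> {0..<n} then - (xs ! k) else xs ! k)"
      using xs len nth_mem by fastforce
    have "scale (alphaf n {0..<n} n) (u (br xs)) = 0"
      using final[OF vs ma len n1 _ hx Padd Psc uw Pu Pw] nij[OF len] by simp
    then have "u (br xs) = 0" using nz by (simp add: alphaf_full)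
    then show ?thesis using uw[of "br xs"] Pw[of "br xs"] by simp
  qed
  have gp: "graded_subalgebra scale Gr n br alpha {x. P x = x}"
    unfolding graded_subalgebra_def using subp spp brp Pa by auto
  have gm: "graded_subalgebra scale Gr n br alpha {x. P x = - x}"
    unfolding graded_subalgebra_def using subm spm brm Pa aneg by auto
  have np: "{x. P x = x} \<noteq> {0}"
  proof
    assume e: "{x. P x = x} = {0}"
    have "P v = - v" for v
    proof -
      have "u v \<in> {x. P x = x}" using Pu by simp
      then have "u v = 0" using e by blast
      then have "v + P v = 0" unfolding u_def by simp
      then show ?thesis by (simp add: eq_neg_iff_add_eq_0 add.commute)
    qed
    then show False using Pm by blast
  qed
  have nm: "{x. P x = - x} \<noteq> {0}"
  proof
    assume e: "{x. P x = - x} = {0}"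
    have "P v = v" for v
    proof -
      have "w v \<in> {x. P x = - x}" using Pw by simp
      then have "w v = 0" using e by blast
      then have "v - P v = 0" unfolding w_def by simp
      then show ?thesis by simp
    qed
    then show False using Pid by (metis eq_id_iff)
  qed
  have dec: "\<exists>!p. fst p \<in> {x. P x = x} \<and> snd p \<in> {x. P x = - x} \<and> v = fst p + snd p" for v
  proof (rule ex1I[of _ "(u v, w v)"])
    show "fst (u v, w v) \<in> {x. P x = x} \<and> snd (u v, w v) \<in> {x. P x = - x} \<and> v = fst (u v, w v) + snd (u v, w v)"
      using Pu Pw uw by simp
  next
    fix p assume p: "fst p \<in> {x. P x = x} \<and> snd p \<in> {x. P x = - x} \<and> v = fst p + snd p"
    have "(fst p - u v) + (snd p - w v) = 0" using p uw[of v] by (simp add: algebra_simps)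
    moreover have "P (fst p - u v) = fst p - u v" using p Pu Pdiff by simp
    moreover have "P (snd p - w v) = - (snd p - w v)" using p Pw Pdiff by simp
    ultimately have "fst p - u v = 0 \<and> snd p - w v = 0" using eig_sep[OF vs Padd] by blast
    then show "p = (u v, w v)" by (simp add: prod_eq_iff)
  qed
  show ?thesis unfolding subalgebra_decomposition_def using gp gm np nm dec by blast
qed



lemma proj_in:
  assumes gs: "graded_space scale Gr" and gH: "graded_subalgebra scale Gr n br alpha H" and x: "x \<in> H"
  shows "cf Gr x \<gamma> \<in> H"
proof -
  interpret vector_space scale using gs_vs[OF gs] .
  have sH: "subspace H" and spH: "H = span (\<Union>\<delta>. H \<inter> Gr \<delta>)"
    using gH unfolding graded_subalgebra_def by auto
  have "x \<in> span (\<Union>\<delta>. H \<inter> Gr \<delta>)" using x spH by blast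
  then show ?thesis
  proof (induction rule: span_induct)
    case base
    show ?case
    proof (rule subspaceI)
      show "0 \<in> Collect (\<lambda>x. cf Gr x \<gamma> \<in> H)" using cf_zero[OF gs] subspace_0[OF sH] by simp
      show "x + y \<in> Collect (\<lambda>x. cf Gr x \<gamma> \<in> H)" if "x \<in> Collect (\<lambda>x. cf Gr x \<gamma> \<in> H)" "y \<in> Collect (\<lambda>x. cf Gr x \<gamma> \<in> H)" for x y
        using that cf_add[OF gs, of x y] subspace_add[OF sH] by simp
      show "scale c x \<in> Collect (\<lambda>x. cf Gr x \<gamma> \<in> H)" if "x \<in> Collect (\<lambda>x. cf Gr x \<gamma> \<in> H)" for c x
        using that cf_scale[OF gs, of c x] subspace_scale[OF sH] by simp
    qed
  next
    case (step y)
    then obtain \<delta> where y: "y \<in> H" "y \<in> Gr \<delta>" by blast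
    then show ?case using cf_single[OF gs y(2)] subspace_0[OF sH] by simp
  qed
qed

lemma dir2:
  fixes scale :: "'k::field_char_0 \<Rightarrow> 'v::ab_group_add \<Rightarrow> 'v" and Gr :: "'g::ab_group_add \<Rightarrow> 'v set"
  assumes H: "n_hom_lie_color scale Gr n br eps alpha"
    and DEC: "subalgebra_decomposition scale Gr n br alpha Hp Hm"
  shows "\<exists>P. product_structure scale Gr n br alpha P"
proof -
  have n2: "2 \<le> n" and gs: "graded_space scale Gr" and ml: "multilinear scale n br"
    and al: "deg0_linear scale Gr alpha"
    using H unfolding n_hom_lie_color_def by auto
  have vs: "vector_space scale" using gs_vs[OF gs] .
  interpret vector_space scale by fact
  have ma: "madd n br" using multilinear_madd[OF ml] .
  have gp: "graded_subalgebra scale Gr n br alpha Hp" and gm: "graded_subalgebra scale Gr n br alpha Hm"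
    and np: "Hp \<noteq> {0}" and nm: "Hm \<noteq> {0}"
    and ex1: "\<And>v. \<exists>!p. fst p \<in> Hp \<and> snd p \<in> Hm \<and> v = fst p + snd p"
    using DEC unfolding subalgebra_decomposition_def by auto
  have sp: "subspace Hp" and sm: "subspace Hm"
    and ap: "alpha ` Hp \<subseteq> Hp" and am: "alpha ` Hm \<subseteq> Hm"
    and bp: "\<And>xs. length xs = n \<Longrightarrow> set xs \<subseteq> Hp \<Longrightarrow> br xs \<in> Hp"
    and bm: "\<And>xs. length xs = n \<Longrightarrow> set xs \<subseteq> Hm \<Longrightarrow> br xs \<in> Hm"
    using gp gm unfolding graded_subalgebra_def by auto
  have aadd: "\<And>x y. alpha (x + y) = alpha x + alpha y"
    using al unfolding deg0_linear_def Vector_Spaces.linear_iff by auto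
  have aneg: "\<And>x. alpha (- x) = - alpha x" using Pneg_lemma[OF aadd] .
  obtain f where f: "\<And>v. fst (f v) \<in> Hp \<and> snd (f v) \<in> Hm \<and> v = fst (f v) + snd (f v)"
    using ex1 by metis
  have uniq: "f v = (a, c)" if "a \<in> Hp" "c \<in> Hm" "v = a + c" for v a c
    using ex1[of v] f[of v] that by (metis fst_conv snd_conv)
  define P where "P v = fst (f v) - snd (f v)" for v
  have Pp: "P a = a" if "a \<in> Hp" for a
    using uniq[of a 0 a] that subspace_0[OF sm] unfolding P_def by simp
  have Pm: "P c = - c" if "c \<in> Hm" for c
    using uniq[of 0 c c] that subspace_0[OF sp] unfolding P_def by simp
  have Ppm: "P (a + c) = a - c" if "a \<in> Hp" "c \<in> Hm" for a c
    using uniq[of a c "a + c"] that unfolding P_def by simp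
  have fdec: "\<exists>a c. f x = (a, c) \<and> a \<in> Hp \<and> c \<in> Hm \<and> x = a + c \<and> P x = a - c" for x
  proof -
    obtain a c where ac: "f x = (a, c)" by (cases "f x")
    then show ?thesis using f[of x] unfolding P_def by auto
  qed
  have Padd: "P (x + y) = P x + P y" for x y
  proof -
    obtain a1 c1 where 1: "a1 \<in> Hp" "c1 \<in> Hm" "x = a1 + c1" "P x = a1 - c1" using fdec[of x] by blast
    obtain a2 c2 where 2: "a2 \<in> Hp" "c2 \<in> Hm" "y = a2 + c2" "P y = a2 - c2" using fdec[of y] by blast
    have X: "x + y = (a1 + a2) + (c1 + c2)" using 1 2 by (simp add: algebra_simps)
    have M: "P ((a1 + a2) + (c1 + c2)) = (a1 + a2) - (c1 + c2)"
      by (rule Ppm) (use 1 2 subspace_add[OF sp] subspace_add[OF sm] in auto)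
    have "P (x + y) = (a1 + a2) - (c1 + c2)" by (simp only: X M)
    then show ?thesis unfolding 1(4) 2(4) by (simp add: algebra_simps)
  qed
  have Psc: "P (scale k x) = scale k (P x)" for k x
  proof -
    obtain a1 c1 where 1: "a1 \<in> Hp" "c1 \<in> Hm" "x = a1 + c1" "P x = a1 - c1" using fdec[of x] by blast
    have X: "scale k x = scale k a1 + scale k c1" using 1 by (simp add: scale_right_distrib)
    have M: "P (scale k a1 + scale k c1) = scale k a1 - scale k c1"
      by (rule Ppm) (use 1 subspace_scale[OF sp] subspace_scale[OF sm] in auto)
    have "P (scale k x) = scale k a1 - scale k c1" by (simp only: X M)
    then show ?thesis unfolding 1(4) by (simp add: scale_right_diff_distrib)
  qed
  have PP: "P (P v) = v" for v
  proof -
    have "P (P v) = P (fst (f v) + - snd (f v))" unfolding P_def by simp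
    also have "\<dots> = fst (f v) - - snd (f v)" using Ppm f[of v] subspace_neg[OF sm] by metis
    finally show ?thesis using f[of v] by simp
  qed
  have two: "x = 0" if "x + x = 0" for x :: 'v
  proof -
    have "scale (1 + 1) x = 0" using that by (simp only: scale_left_distrib scale_one)
    then show ?thesis by simp
  qed
  have Pid: "P \<noteq> id"
  proof
    assume e: "P = id"
    obtain c where c: "c \<in> Hm" "c \<noteq> 0" using nm subspace_0[OF sm] by blast
    have "c = - c" using Pm[OF c(1)] e by simp
    then have "c + c = 0" by (metis add.right_inverse)
    then show False using two c by blast
  qed
  have Pmi: "P \<noteq> (\<lambda>x. - x)"
  proof
    assume e: "P = (\<lambda>x. - x)"
    obtain c where c: "c \<in> Hp" "c \<noteq> 0" using np subspace_0[OF sp] by blast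
    have "c = - c" using Pp[OF c(1)] e by metis
    then have "c + c = 0" by (metis add.right_inverse)
    then show False using two c by blast
  qed
  have Pgr: "P v \<in> Gr \<gamma>" if v: "v \<in> Gr \<gamma>" for v \<gamma>
  proof -
    have "v = cf Gr v \<gamma>" using cf_single[OF gs v] by simp
    also have "\<dots> = cf Gr (fst (f v)) \<gamma> + cf Gr (snd (f v)) \<gamma>"
      using f[of v] cf_add[OF gs] by metis
    finally have "f v = (cf Gr (fst (f v)) \<gamma>, cf Gr (snd (f v)) \<gamma>)"
      using uniq proj_in[OF gs gp] proj_in[OF gs gm] f by blast
    then have "fst (f v) \<in> Gr \<gamma>" "snd (f v) \<in> Gr \<gamma>"
      using cf_props[OF gs] by (metis fst_conv snd_conv)+
    then show ?thesis unfolding P_def using subspace_diff[OF gs_sub[OF gs]] by blast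
  qed
  have lin: "Vector_Spaces.linear scale scale P"
    unfolding Vector_Spaces.linear_iff using vs Padd Psc by blast
  have Pa: "P (alpha v) = alpha (P v)" for v
  proof -
    have "alpha v = alpha (fst (f v)) + alpha (snd (f v))" using f[of v] aadd by metis
    then have "P (alpha v) = alpha (fst (f v)) - alpha (snd (f v))"
      using Ppm f[of v] ap am by (metis image_subset_iff)
    moreover have "alpha (fst (f v) - snd (f v)) = alpha (fst (f v)) - alpha (snd (f v))"
      using aadd[of "fst (f v)" "- snd (f v)"] aneg[of "snd (f v)"] by simp
    moreover have "P v = fst (f v) - snd (f v)" by (simp only: P_def)
    ultimately show ?thesis by simp
  qed
  have Pneg: "P (- x) = - P x" for x using Pneg_lemma[OF Padd] .
  define Phi where "Phi xs = br (map P xs) - P (bracketN br P (n - 1) xs)" for xs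
  have Phi_add: "Phi (xs[m := a + c]) = Phi (xs[m := a]) + Phi (xs[m := c])"
    if len: "length xs = n" and m: "m < n" for xs m a c
  proof -
    have "br (map P (xs[m := a + c])) = br ((map P xs)[m := P a + P c])" by (simp add: map_update Padd)
    also have "\<dots> = br ((map P xs)[m := P a]) + br ((map P xs)[m := P c])"
      using ma len m unfolding madd_def by simp
    also have "\<dots> = br (map P (xs[m := a])) + br (map P (xs[m := c]))" by (simp add: map_update)
    finally have 1: "br (map P (xs[m := a + c])) = br (map P (xs[m := a])) + br (map P (xs[m := c]))" .
    have 2: "P (bracketN br P (n - 1) (xs[m := a + c])) =
        P (bracketN br P (n - 1) (xs[m := a])) + P (bracketN br P (n - 1) (xs[m := c]))"
      using bracketN_add[OF ma len m Padd, of "n - 1" a c] Padd by simp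
    show ?thesis unfolding Phi_def 1 2 by (simp add: algebra_simps)
  qed
  have base: "Phi xs = 0" if len: "length xs = n" and r: "\<And>k. k < n \<Longrightarrow> xs ! k \<in> Hp \<union> Hm" for xs
  proof -
    define R where "R = {k. k < n \<and> xs ! k \<notin> Hp}"
    have R: "R \<subseteq> {0..<n}" unfolding R_def by auto
    have hx: "\<And>k. k < n \<Longrightarrow> P (xs ! k) = (if k \<in> R then - (xs ! k) else xs ! k)"
      using r Pp Pm unfolding R_def by auto
    define b where "b = br xs"
    have b: "br xs = fst (f b) + snd (f b)" unfolding b_def using f[of "br xs"] by blast
    have Pu: "P (fst (f b)) = fst (f b)" using Pp f[of b] by blast
    have Pw: "P (snd (f b)) = - snd (f b)" using Pm f[of b] by blast
    have A: "scale (alphaf n R n) (fst (f b)) = 0"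
    proof (cases "\<exists>q<n. q \<notin> R")
      case True
      then obtain q where "q < n" "q \<notin> R" by blast
      then have "alphaf n R n = (0::'k)" by (intro alphaf_zero)
      then show ?thesis by simp
    next
      case False
      then have "\<And>k. k < n \<Longrightarrow> xs ! k \<in> Hm" using r unfolding R_def by auto
      then have "set xs \<subseteq> Hm" using len by (auto simp: in_set_conv_nth)
      then have "b \<in> Hm" using bm len b_def by blast
      then have "f b = (0, b)" using uniq[of 0 b b] subspace_0[OF sp] by simp
      then show ?thesis by simp
    qed
    have B: "scale (betaf n R n) (snd (f b)) = 0"
    proof (cases "\<exists>r\<in>R. r < n")
      case True
      then obtain q where "q \<in> R" "q < n" by blast
      then have "betaf n R n = (0::'k)" by (intro betaf_zero)
      then show ?thesis by simp
    next
      case False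
      then have "\<And>k. k < n \<Longrightarrow> xs ! k \<in> Hp" unfolding R_def by auto
      then have "set xs \<subseteq> Hp" using len by (auto simp: in_set_conv_nth)
      then have "b \<in> Hp" using bp len b_def by blast
      then have "f b = (b, 0)" using uniq[of b 0 b] subspace_0[OF sm] by simp
      then show ?thesis by simp
    qed
    have "br (map P xs) = P (bracketN br P (n - 1) xs)"
      using final[OF vs ma len _ R hx Padd Psc b Pu Pw] n2 A B by simp
    then show ?thesis unfolding Phi_def by simp
  qed
  have ind: "\<forall>xs. length xs = n \<longrightarrow> (\<forall>k. m \<le> k \<longrightarrow> k < n \<longrightarrow> xs ! k \<in> Hp \<union> Hm) \<longrightarrow> Phi xs = 0" for m
  proof (induction m)
    case 0
    then show ?case using base by auto
  next
    case (Suc m)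
    show ?case
    proof (intro allI impI)
      fix xs :: "'v list" assume len: "length xs = n" and r: "\<forall>k. Suc m \<le> k \<longrightarrow> k < n \<longrightarrow> xs ! k \<in> Hp \<union> Hm"
      show "Phi xs = 0"
      proof (cases "m < n")
        case False
        then show ?thesis using Suc.IH len r by auto
      next
        case True
        define a c where "a = fst (f (xs ! m))" and "c = snd (f (xs ! m))"
        have xs: "xs = xs[m := a + c]" using f[of "xs ! m"] a_def c_def by simp
        have "Phi (xs[m := a]) = 0"
          using Suc.IH len r f[of "xs ! m"] True a_def
          by (auto simp: nth_list_update le_less_Suc_eq Suc_le_eq)
        moreover have "Phi (xs[m := c]) = 0"
          using Suc.IH len r f[of "xs ! m"] True c_def
          by (auto simp: nth_list_update le_less_Suc_eq Suc_le_eq)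
        ultimately show ?thesis using Phi_add[OF len True, of a c] xs by simp
      qed
    qed
  qed
  have nij: "br (map P xs) = P (bracketN br P (n - 1) xs)" if "length xs = n" for xs
    using ind[of n] that unfolding Phi_def by auto
  have "product_structure scale Gr n br alpha P"
    unfolding product_structure_def almost_product_def nijenhuis_def deg0_linear_def
    using lin Pgr Pid Pmi PP Pa nij by (auto simp: fun_eq_iff)
  then show ?thesis by blast
qed


theorem theorem6p8:
  fixes scale :: "'k::field_char_0 \<Rightarrow> 'v::ab_group_add \<Rightarrow> 'v"
    and Gr :: "'g::ab_group_add \<Rightarrow> 'v set"
    and n :: nat and br :: "'v list \<Rightarrow> 'v"
    and eps :: "'g \<Rightarrow> 'g \<Rightarrow> 'k" and alpha :: "'v \<Rightarrow> 'v"
  assumes "n_hom_lie_color scale Gr n br eps alpha"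
  shows "((\<exists>P. product_structure scale Gr n br alpha P) \<longleftrightarrow>
            (\<exists>Hp Hm. subalgebra_decomposition scale Gr n br alpha Hp Hm))
       \<and> (\<forall>P. product_structure scale Gr n br alpha P \<longrightarrow>
            subalgebra_decomposition scale Gr n br alpha {x. P x = x} {x. P x = - x})"
  using dir1[OF assms] dir2[OF assms] by blast

end
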